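(* Consider the protocol $\Pi_{(t+1,n)}$ described in the context, with $1\le t$ and $n>2t$, run on an automaton $\mathcal{A}=(ST,\Sigma,\mu)$ with states $s_1,\dots,s_m$ from initial state $s_{\mathrm{init}}$. Then for every $r\ge 0$, after the $r$-th clock tick has been processed, and for every $j\in\{1,\dots,m\}$, there is a polynomial $Q_j$ over $\mathbb{F}$ of degree at most $t$ such that $\ell^i_j=Q_j(i)$ for all $i=1,\dots,n$, and $Q_j(0)=1$ if $s_j$ is the state reached by $\mathcal{A}$ from $s_{\mathrm{init}}$ on the input symbols received during ticks $1,\dots,r$, while $Q_j(0)=0$ otherwise. Consequently, the labels of any $t+1$ agents determine (by Lagrange interpolation at $0$) all the values $Q_j(0)$, and hence the current state of $\mathcal{A}$.
   Context: A finite-state automaton $\mathcal{A}$ has finite state set $ST=\{s_1,\dots,s_m\}$, finite alphabet $\Sigma$ and transition function $\mu:ST\times\Sigma\to ST$. Time proceeds in global clock ticks $r=1,2,\dots$; at each tick at most one input symbol arrives (simultaneously to all agents), possibly none. Protocol $\Pi_{(t+1,n)}$. Let $\mathbb{F}$ be a finite field with $|\mathbb{F}|>n$, and identify agent indices $1,\dots,n$ with distinct nonzero elements of $\mathbb{F}$. Let $G:\{0,1\}^{len}\to\mathbb{F}^m\times\{0,1\}^{len}$, writing $G(x)=(b_1,\dots,b_m)\|S$. Let $\mathcal{T}$ be the family of all subsets of $\{A_1,\dots,A_n\}$ of size $n-t+1$. Initialization: for each $j$ the dealer picks a uniformly random polynomial $f_j$ over $\mathbb{F}$ of degree at most $t$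 with $f_j(0)=1$ if $j=\mathrm{init}$ and $f_j(0)=0$ otherwise (Shamir sharing), and agent $A_i$ sets $\ell^i_j:=f_j(i)$. For each $T\in\mathcal{T}$ the dealer picks a uniform seed $\mathrm{seed}^T\in\{0,1\}^{len}$ and gives it to every agent in $T$. Event processing (at every tick): each agent $A_i$ (1) if a symbol $\gamma$ arrived, replaces simultaneously for all $j$: $\ell^i_j:=\sum_{k:\,\mu(s_k,\gamma)=s_j}\ell^i_k$ (sum in $\mathbb{F}$; empty sum $=0$); (2) for each $T\in\mathcal{T}$ with $A_i\in T$, computes $G(\mathrm{seed}^T)=(b^T_1,\dots,b^T_m)\|S^T$ and replaces $\mathrm{seed}^T$ by $S^T$ (erasing the old seed); (3) for each $j$ sets $\ell^i_j:=\ell^i_j+\sum_{T\in\mathcal{T},\,A_i\in T}P^T_j(i)$, where $P^T_j$ is the unique polynomial of degree at most $t$ with $P^T_j(0)=0$, $P^T_j(a)=0$ for every index $a$ with $A_a\notin T$ (there are $t-1$ such), and $P^T_j(k_T)=b^T_j$ where $k_T$ is the minimal index of an agent in $T$. Reconstruction: at least $t+1$ agents submit their labels; for each $j$ the dealer interpolates the degree-$\le t$ polynomial through their points $(i,\ell^i_j)$, evaluates it at $0$, and outputs the state whose value is $1$. *)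

theory Defs
  imports "HOL-Computational_Algebra.Polynomial"
begin

text \<open>Agents are numbered 1..n; idx i is the nonzero field element identified with agent i.
States of the automaton are the elements of a finite type 's (so m = CARD('s)).
Seeds are elements of an abstract type 'seed (standing for bit strings of length len);
G seed = (b, S) with b :: 's \<Rightarrow> 'f the vector (b_1,...,b_m) and S the next seed.\<close>

definition Tfam :: "nat \<Rightarrow> nat \<Rightarrow> nat set set" where
  "Tfam n t = {T. T \<subseteq> {1..n} \<and> card T = n - t + 1}"

definition PT :: "nat \<Rightarrow> nat \<Rightarrow> (nat \<Rightarrow> 'f::field) \<Rightarrow> nat set \<Rightarrow> 'f \<Rightarrow> 'f poly" where
  "PT n t idx T b = (THE p. degree p \<le> t \<and> poly p 0 = 0
      \<and> (\<forall>a\<in>{1..n} - T. poly p (idx a) = 0) \<and> poly p (idx (Min T)) = b)"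

text \<open>One tick of event processing for agent i. Local state: labels (l_j)_j and the agent's
own copy of seed^T for each T (only used for T containing i).\<close>
definition agent_step ::
  "nat \<Rightarrow> nat \<Rightarrow> (nat \<Rightarrow> 'f::field) \<Rightarrow> ('s::finite \<Rightarrow> 'a \<Rightarrow> 's)
   \<Rightarrow> ('seed \<Rightarrow> ('s \<Rightarrow> 'f) \<times> 'seed) \<Rightarrow> nat \<Rightarrow> 'a option
   \<Rightarrow> ('s \<Rightarrow> 'f) \<times> (nat set \<Rightarrow> 'seed) \<Rightarrow> ('s \<Rightarrow> 'f) \<times> (nat set \<Rightarrow> 'seed)" where
  "agent_step n t idx mu G i inp st =
    (let l = fst st; sd = snd st;
         l1 = (case inp of None \<Rightarrow> l
                 | Some g \<Rightarrow> (\<lambda>j. \<Sum>k\<in>{k. mu k g = j}. l k));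
         l2 = (\<lambda>j. l1 j + (\<Sum>T\<in>{T\<in>Tfam n t. i \<in> T}.
                              poly (PT n t idx T (fst (G (sd T)) j)) (idx i)));
         sd' = (\<lambda>T. if i \<in> T then snd (G (sd T)) else sd T)
     in (l2, sd'))"

text \<open>The local state of agent i after tick r has been processed (r = 0: after initialization).
f j are the dealer's Shamir polynomials, seed0 T the dealer's seed for T, and
inp r the symbol (if any) arriving at tick r (r \<ge> 1).\<close>
primrec run ::
  "nat \<Rightarrow> nat \<Rightarrow> (nat \<Rightarrow> 'f::field) \<Rightarrow> ('s::finite \<Rightarrow> 'a \<Rightarrow> 's)
   \<Rightarrow> ('seed \<Rightarrow> ('s \<Rightarrow> 'f) \<times> 'seed) \<Rightarrow> ('s \<Rightarrow> 'f poly) \<Rightarrow> (nat set \<Rightarrow> 'seed)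
   \<Rightarrow> (nat \<Rightarrow> 'a option) \<Rightarrow> nat \<Rightarrow> nat \<Rightarrow> ('s \<Rightarrow> 'f) \<times> (nat set \<Rightarrow> 'seed)" where
  "run n t idx mu G f seed0 inp 0 i = ((\<lambda>j. poly (f j) (idx i)), seed0)"
| "run n t idx mu G f seed0 inp (Suc r) i =
     agent_step n t idx mu G i (inp (Suc r)) (run n t idx mu G f seed0 inp r i)"

definition label where
  "label n t idx mu G f seed0 inp r i j = fst (run n t idx mu G f seed0 inp r i) j"

primrec reach :: "('s \<Rightarrow> 'a \<Rightarrow> 's) \<Rightarrow> 's \<Rightarrow> (nat \<Rightarrow> 'a option) \<Rightarrow> nat \<Rightarrow> 's" where
  "reach mu init inp 0 = init"
| "reach mu init inp (Suc r) =
     (case inp (Suc r) of None \<Rightarrow> reach mu init inp r | Some g \<Rightarrow> mu (reach mu init inp r) g)"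

definition reconstruct :: "nat \<Rightarrow> (nat \<Rightarrow> 'f::field) \<Rightarrow> nat set \<Rightarrow> (nat \<Rightarrow> 's \<Rightarrow> 'f) \<Rightarrow> 's" where
  "reconstruct t idx S L =
     (THE s. poly (THE p. degree p \<le> t \<and> (\<forall>i\<in>S. poly p (idx i) = L i s)) 0 = 1)"

end

theory Submission
  imports Defs
begin

lemma PT_props:
  fixes idx :: "nat \<Rightarrow> 'f::field"
  assumes t1: "1 \<le> t" and nt: "t \<le> n" and inj: "inj_on idx {1..n}"
    and nz: "\<forall>i\<in>{1..n}. idx i \<noteq> 0" and T: "T \<in> Tfam n t"
  shows "degree (PT n t idx T b) \<le> t \<and> poly (PT n t idx T b) 0 = 0
     \<and> (\<forall>a\<in>{1..n} - T. poly (PT n t idx T b) (idx a) = 0)"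
proof -
  define A where "A = {1..n} - T"
  have Tsub: "T \<subseteq> {1..n}" and cT: "card T = n - t + 1" using T by (auto simp: Tfam_def)
  have finT: "finite T" using Tsub finite_subset by blast
  have "T \<noteq> {}" using cT by auto
  define m0 where "m0 = Min T"
  have m0T: "m0 \<in> T" using finT \<open>T \<noteq> {}\<close> m0_def by simp
  have m0n: "m0 \<in> {1..n}" using m0T Tsub by blast
  have finA: "finite A" by (simp add: A_def)
  have cA: "card A = t - 1" unfolding A_def using card_Diff_subset[OF finT Tsub] cT t1 nt by simp
  define pr where "pr = [:0,1:] * (\<Prod>a\<in>A. [:-idx a, 1:])"
  have dpr: "degree pr \<le> t"
  proof -
    have "degree (\<Prod>a\<in>A. [:-idx a, 1:]) \<le> card A"
      using degree_prod_sum_le[OF finA, of "\<lambda>a. [:-idx a, 1:]"] by simp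
    then show ?thesis unfolding pr_def using degree_mult_le[of "[:0,1:]" "\<Prod>a\<in>A. [:-idx a, 1:]"] cA t1 by simp
  qed
  have prm0: "poly pr (idx m0) \<noteq> 0"
  proof -
    have "\<forall>a\<in>A. idx m0 \<noteq> idx a"
      using inj m0n m0T unfolding A_def inj_on_def by blast
    then show ?thesis unfolding pr_def using nz m0n finA by (simp add: poly_prod prod_zero_iff)
  qed
  define p0 where "p0 = smult (b / poly pr (idx m0)) pr"
  have P0: "degree p0 \<le> t \<and> poly p0 0 = 0 \<and> (\<forall>a\<in>{1..n} - T. poly p0 (idx a) = 0)
            \<and> poly p0 (idx (Min T)) = b"
    using dpr prm0 finA unfolding p0_def pr_def A_def m0_def
    by (auto simp: poly_prod prod_zero_iff degree_smult_le intro: order.trans[OF degree_smult_le])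
  define X where "X = insert 0 (insert (idx m0) (idx ` A))"
  have cX: "card X = t + 1"
  proof -
    have "card (idx ` A) = t - 1" using card_image[OF inj_on_subset[OF inj]] cA by (auto simp: A_def)
    moreover have "idx m0 \<notin> idx ` A" using inj m0n m0T unfolding A_def inj_on_def by blast
    moreover have "0 \<notin> insert (idx m0) (idx ` A)" using nz m0n by (auto simp: A_def)
    ultimately show ?thesis unfolding X_def using finA t1 by simp
  qed
  have "\<exists>!p. degree p \<le> t \<and> poly p 0 = 0
      \<and> (\<forall>a\<in>{1..n} - T. poly p (idx a) = 0) \<and> poly p (idx (Min T)) = b"
  proof (rule ex1I[of _ p0])
    show "degree p0 \<le> t \<and> poly p0 0 = 0 \<and> (\<forall>a\<in>{1..n} - T. poly p0 (idx a) = 0)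
            \<and> poly p0 (idx (Min T)) = b" by (rule P0)
    fix q assume q: "degree q \<le> t \<and> poly q 0 = 0 \<and> (\<forall>a\<in>{1..n} - T. poly q (idx a) = 0)
            \<and> poly q (idx (Min T)) = b"
    show "q = p0"
      by (rule poly_eqI_degree[of X]) (use q P0 cX in \<open>auto simp: X_def A_def m0_def\<close>)
  qed
  from theI'[OF this] show ?thesis unfolding PT_def by blast
qed


lemma run_seed: "i \<in> T \<Longrightarrow> snd (run n t idx mu G f seed0 inp r i) T = ((snd \<circ> G) ^^ r) (seed0 T)"
  by (induction r) (simp_all add: agent_step_def Let_def)

lemma label_Suc:
  "label n t idx mu G f seed0 inp (Suc r) i j =
    (case inp (Suc r) of None \<Rightarrow> label n t idx mu G f seed0 inp r i j
       | Some g \<Rightarrow> (\<Sum>k\<in>{k. mu k g = j}. label n t idx mu G f seed0 inp r i k))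
    + (\<Sum>T\<in>{T\<in>Tfam n t. i \<in> T}. poly (PT n t idx T (fst (G (((snd \<circ> G) ^^ r) (seed0 T))) j)) (idx i))"
proof -
  have "(\<Sum>T\<in>{T\<in>Tfam n t. i \<in> T}. poly (PT n t idx T (fst (G (snd (run n t idx mu G f seed0 inp r i) T)) j)) (idx i))
    = (\<Sum>T\<in>{T\<in>Tfam n t. i \<in> T}. poly (PT n t idx T (fst (G (((snd \<circ> G) ^^ r) (seed0 T))) j)) (idx i))"
    by (rule sum.cong) (auto simp: run_seed)
  then show ?thesis
    by (simp add: label_def agent_step_def Let_def split: option.splits)
qed

lemma finite_Tfam: "finite (Tfam n t)"
proof -
  have "Tfam n t \<subseteq> Pow {1..n}" by (auto simp: Tfam_def)
  then show ?thesis by (rule finite_subset) simp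
qed

lemma invariant:
  fixes idx :: "nat \<Rightarrow> 'f::field" and mu :: "'s::finite \<Rightarrow> 'a \<Rightarrow> 's"
  assumes t1: "1 \<le> t" and nt: "t \<le> n" and inj: "inj_on idx {1..n}"
    and nz: "\<forall>i\<in>{1..n}. idx i \<noteq> 0"
    and fj: "\<forall>j. degree (f j) \<le> t \<and> poly (f j) 0 = (if j = init then 1 else 0)"
  shows "\<exists>Qf. \<forall>j. degree (Qf j) \<le> t
            \<and> (\<forall>i\<in>{1..n}. label n t idx mu G f seed0 inp r i j = poly (Qf j) (idx i))
            \<and> poly (Qf j) 0 = (if j = reach mu init inp r then 1 else 0)"
proof (induction r)
  case 0
  show ?case by (rule exI[of _ f]) (simp add: label_def fj)
next
  case (Suc r)
  then obtain Qf where Q: "\<And>j. degree (Qf j) \<le> t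
            \<and> (\<forall>i\<in>{1..n}. label n t idx mu G f seed0 inp r i j = poly (Qf j) (idx i))
            \<and> poly (Qf j) 0 = (if j = reach mu init inp r then 1 else 0)" by blast
  define sd where "sd T = ((snd \<circ> G) ^^ r) (seed0 T)" for T
  define L where "L j = (case inp (Suc r) of None \<Rightarrow> Qf j | Some g \<Rightarrow> (\<Sum>k\<in>{k. mu k g = j}. Qf k))" for j
  define Q' where "Q' j = L j + (\<Sum>T\<in>Tfam n t. PT n t idx T (fst (G (sd T)) j))" for j
  have PTp: "\<And>T b. T \<in> Tfam n t \<Longrightarrow> degree (PT n t idx T b) \<le> t \<and> poly (PT n t idx T b) 0 = 0
     \<and> (\<forall>a\<in>{1..n} - T. poly (PT n t idx T b) (idx a) = 0)"
    using PT_props[OF t1 nt inj nz] by blast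
  show ?case
  proof (rule exI[of _ Q'], intro allI conjI ballI)
    fix j
    have dL: "degree (L j) \<le> t"
      unfolding L_def using Q by (auto split: option.splits intro!: degree_sum_le)
    have "degree (\<Sum>T\<in>Tfam n t. PT n t idx T (fst (G (sd T)) j)) \<le> t"
      using PTp by (intro degree_sum_le) (auto simp: finite_Tfam)
    then show "degree (Q' j) \<le> t" unfolding Q'_def using dL degree_add_le by blast
  next
    fix j i assume i: "i \<in> {1..n}"
    have "(\<Sum>T\<in>{T\<in>Tfam n t. i \<in> T}. poly (PT n t idx T (fst (G (sd T)) j)) (idx i))
        = (\<Sum>T\<in>Tfam n t. poly (PT n t idx T (fst (G (sd T)) j)) (idx i))"
      by (rule sum.mono_neutral_left) (use PTp i in \<open>auto simp: finite_Tfam\<close>)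
    moreover have "(case inp (Suc r) of None \<Rightarrow> label n t idx mu G f seed0 inp r i j
       | Some g \<Rightarrow> (\<Sum>k\<in>{k. mu k g = j}. label n t idx mu G f seed0 inp r i k)) = poly (L j) (idx i)"
      unfolding L_def using Q i by (auto split: option.splits simp: poly_sum)
    ultimately show "label n t idx mu G f seed0 inp (Suc r) i j = poly (Q' j) (idx i)"
      unfolding label_Suc Q'_def sd_def by (simp add: poly_sum)
  next
    fix j
    have s0: "poly (\<Sum>T\<in>Tfam n t. PT n t idx T (fst (G (sd T)) j)) 0 = 0"
      using PTp by (simp add: poly_sum)
    have "poly (L j) 0 = (if j = reach mu init inp (Suc r) then 1 else 0)"
    proof (cases "inp (Suc r)")
      case None then show ?thesis using Q by (simp add: L_def)
    next
      case (Some g)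
      have "poly (L j) 0 = (\<Sum>k\<in>{k. mu k g = j}. if k = reach mu init inp r then 1 else 0)"
        using Some Q by (simp add: L_def poly_sum)
      also have "\<dots> = (if reach mu init inp r \<in> {k. mu k g = j} then 1 else 0)"
        using sum.delta[of "{k. mu k g = j}" "reach mu init inp r" "\<lambda>_. 1::'f"] by (simp add: eq_commute)
      finally show ?thesis using Some by auto
    qed
    then show "poly (Q' j) 0 = (if j = reach mu init inp (Suc r) then 1 else 0)"
      unfolding Q'_def using s0 by simp
  qed
qed

theorem proposition3:
  fixes n t :: nat
    and idx :: "nat \<Rightarrow> 'f::{field,finite}"
    and mu :: "'s::finite \<Rightarrow> 'a \<Rightarrow> 's"
    and init :: 's
    and G :: "'seed \<Rightarrow> ('s \<Rightarrow> 'f) \<times> 'seed"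
    and f :: "'s \<Rightarrow> 'f poly"
    and seed0 :: "nat set \<Rightarrow> 'seed"
    and inp :: "nat \<Rightarrow> 'a option"
  assumes "1 \<le> t" and "n > 2 * t"
    and "card (UNIV :: 'f set) > n"
    and "inj_on idx {1..n}" and "\<forall>i\<in>{1..n}. idx i \<noteq> 0"
    and "\<forall>j. degree (f j) \<le> t \<and> poly (f j) 0 = (if j = init then 1 else 0)"
  shows "(\<forall>r j. \<exists>Q. degree Q \<le> t
            \<and> (\<forall>i\<in>{1..n}. label n t idx mu G f seed0 inp r i j = poly Q (idx i))
            \<and> poly Q 0 = (if j = reach mu init inp r then 1 else 0))
         \<and> (\<forall>r S. S \<subseteq> {1..n} \<and> card S \<ge> t + 1 \<longrightarrow>
            reconstruct t idx S (label n t idx mu G f seed0 inp r) = reach mu init inp r)"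
  proof -
  note t1 = assms(1)
  have nt: "t \<le> n" using assms(2) by simp
  note inj = assms(4) and nz = assms(5) and fj = assms(6)
  have inv: "\<And>r. \<exists>Qf. \<forall>j. degree (Qf j) \<le> t
            \<and> (\<forall>i\<in>{1..n}. label n t idx mu G f seed0 inp r i j = poly (Qf j) (idx i))
            \<and> poly (Qf j) 0 = (if j = reach mu init inp r then 1 else 0)"
    by (rule invariant[OF t1 nt inj nz fj])
  show ?thesis
  proof (intro conjI allI impI)
    fix r j show "\<exists>Q. degree Q \<le> t
            \<and> (\<forall>i\<in>{1..n}. label n t idx mu G f seed0 inp r i j = poly Q (idx i))
            \<and> poly Q 0 = (if j = reach mu init inp r then 1 else 0)"
      using inv[of r] by blast
  next
    fix r S assume S: "S \<subseteq> {1..n} \<and> t + 1 \<le> card S"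
    obtain Qf where Q: "\<And>j. degree (Qf j) \<le> t
            \<and> (\<forall>i\<in>{1..n}. label n t idx mu G f seed0 inp r i j = poly (Qf j) (idx i))
            \<and> poly (Qf j) 0 = (if j = reach mu init inp r then 1 else 0)" using inv[of r] by blast
    have cS: "card (idx ` S) = card S"
      using S inj by (intro card_image) (auto intro: inj_on_subset)
    have th: "(THE p. degree p \<le> t \<and> (\<forall>i\<in>S. poly p (idx i) = label n t idx mu G f seed0 inp r i s)) = Qf s" for s
    proof (rule the_equality)
      show "degree (Qf s) \<le> t \<and> (\<forall>i\<in>S. poly (Qf s) (idx i) = label n t idx mu G f seed0 inp r i s)"
        using Q[of s] S by auto
      fix p assume p: "degree p \<le> t \<and> (\<forall>i\<in>S. poly p (idx i) = label n t idx mu G f seed0 inp r i s)"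
      show "p = Qf s"
        by (rule poly_eqI_degree[of "idx ` S"]) (use p Q[of s] S cS in auto)
    qed
    show "reconstruct t idx S (label n t idx mu G f seed0 inp r) = reach mu init inp r"
      unfolding reconstruct_def th
    proof (rule the_equality)
      show "poly (Qf (reach mu init inp r)) 0 = 1" using Q by simp
      fix s assume "poly (Qf s) 0 = 1"
      then show "s = reach mu init inp r" using Q[of s] by (auto split: if_splits)
    qed
  qed
qed

end
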